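(* Let $U$ be a nonempty finite set, $R\subseteq U\times U$ serial and transitive, and let $h_1$ be the height function of the closed-set lattice $\mathcal{L}(M(Reg(U,R)))$. Then for every $X\in Reg(U,R)$ (which is a closed set of $M(Reg(U,R))$), $h(X)=h_1(X)$.
   Context: $R_s(x)=\{y\in U\mid xRy\}$; $\underline{R}(X)=\{x\mid R_s(x)\subseteq X\}$, $\overline{R}(X)=\{x\mid R_s(x)\cap X\neq\emptyset\}$; $X$ is regular if $X=\underline{R}(\overline{R}(X))$, and $Reg(U,R)$ is the lattice of regular sets under inclusion, with least element $\emptyset$. $h(A)$ is the length of a maximal chain in $[\emptyset,A]$ within $Reg(U,R)$. $M(Reg(U,R))$ is the matroid on $U$ with independent sets $\{X\subseteq U\mid h(Y)\ge|X\cap Y|\ \forall Y\in Reg(U,R)\}$, rank function $r(X)=\max\{|I|\mid I\subseteq X \text{ independent}\}$, closure operator $cl(X)=\{u\in U\mid r(X\cup\{u\})=r(X)\}$; a set $X$ is closed if $cl(X)=X$. $\mathcal{L}(M)$ is the lattice of closed sets of $M$ under inclusion (join $cl(X\cup Y)$, meet $X\cap Y$), whose least element is $cl(\emptyset)$; $h_1(X)$ is the length of a maximal chain from the least element to $X$ in $\mathcal{L}(M)$. *)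

theory Defs
  imports Main
begin

definition succ_set :: "'a set \<Rightarrow> ('a \<times> 'a) set \<Rightarrow> 'a \<Rightarrow> 'a set" where
  "succ_set U R x = {y \<in> U. (x, y) \<in> R}"

definition lower_approx :: "'a set \<Rightarrow> ('a \<times> 'a) set \<Rightarrow> 'a set \<Rightarrow> 'a set" where
  "lower_approx U R X = {x \<in> U. succ_set U R x \<subseteq> X}"

definition upper_approx :: "'a set \<Rightarrow> ('a \<times> 'a) set \<Rightarrow> 'a set \<Rightarrow> 'a set" where
  "upper_approx U R X = {x \<in> U. succ_set U R x \<inter> X \<noteq> {}}"

definition serial_on :: "'a set \<Rightarrow> ('a \<times> 'a) set \<Rightarrow> bool" where
  "serial_on U R \<longleftrightarrow> (\<forall>x\<in>U. \<exists>y\<in>U. (x, y) \<in> R)"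

definition Reg :: "'a set \<Rightarrow> ('a \<times> 'a) set \<Rightarrow> 'a set set" where
  "Reg U R = {X. X \<subseteq> U \<and> X = lower_approx U R (upper_approx U R X)}"

definition chain_from_to :: "'b set set \<Rightarrow> 'b set \<Rightarrow> 'b set \<Rightarrow> 'b set list \<Rightarrow> bool" where
  "chain_from_to P b a cs \<longleftrightarrow> cs \<noteq> [] \<and> set cs \<subseteq> P \<and> sorted_wrt (\<subset>) cs
      \<and> hd cs = b \<and> last cs = a"

definition height_in :: "'b set set \<Rightarrow> 'b set \<Rightarrow> 'b set \<Rightarrow> nat" where
  "height_in P b a = Max {length cs - 1 | cs. chain_from_to P b a cs}"

definition hReg :: "'a set \<Rightarrow> ('a \<times> 'a) set \<Rightarrow> 'a set \<Rightarrow> nat" where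
  "hReg U R A = height_in (Reg U R) {} A"

definition indepM :: "'a set \<Rightarrow> ('a \<times> 'a) set \<Rightarrow> 'a set \<Rightarrow> bool" where
  "indepM U R X \<longleftrightarrow> X \<subseteq> U \<and> (\<forall>Y \<in> Reg U R. card (X \<inter> Y) \<le> hReg U R Y)"

definition rankM :: "'a set \<Rightarrow> ('a \<times> 'a) set \<Rightarrow> 'a set \<Rightarrow> nat" where
  "rankM U R X = Max {card I | I. I \<subseteq> X \<and> indepM U R I}"

definition clM :: "'a set \<Rightarrow> ('a \<times> 'a) set \<Rightarrow> 'a set \<Rightarrow> 'a set" where
  "clM U R X = {u \<in> U. rankM U R (X \<union> {u}) = rankM U R X}"

(* closed sets of M, i.e. the carrier of the lattice L(M) *)
definition closedSets :: "'a set \<Rightarrow> ('a \<times> 'a) set \<Rightarrow> 'a set set" where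
  "closedSets U R = {X. X \<subseteq> U \<and> clM U R X = X}"

definition h1 :: "'a set \<Rightarrow> ('a \<times> 'a) set \<Rightarrow> 'a set \<Rightarrow> nat" where
  "h1 U R X = height_in (closedSets U R) (clM U R {}) X"

end

theory Submission
  imports Defs
begin

lemma chain_bound:
  fixes g :: "'b set \<Rightarrow> nat"
  assumes "sorted_wrt (\<subset>) cs" "set cs \<subseteq> Q" "cs \<noteq> []"
    and "\<forall>a\<in>Q. \<forall>b\<in>Q. a \<subset> b \<longrightarrow> g a < g b"
  shows "g (hd cs) + (length cs - 1) \<le> g (last cs)"
  using assms(1-3)
proof (induction cs)
  case Nil then show ?case by simp
next
  case (Cons x xs)
  show ?case
  proof (cases "xs = []")
    case True then show ?thesis by simp
  next
    case False
    have s1: "sorted_wrt (\<subset>) xs" using Cons.prems(1) by simp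
    have s2: "set xs \<subseteq> Q" using Cons.prems(2) by simp
    have ih: "g (hd xs) + (length xs - 1) \<le> g (last xs)"
      using Cons.IH[OF s1 s2 False] .
    have hx: "hd xs \<in> set xs" using False by (rule hd_in_set)
    have "x \<subset> hd xs" using Cons.prems(1) hx by simp
    moreover have "x \<in> Q" "hd xs \<in> Q" using Cons.prems(2) hx s2 by auto
    ultimately have "g x < g (hd xs)" using assms(4) by blast
    moreover have "length xs \<ge> 1" using False by (cases xs) auto
    ultimately show ?thesis using ih False by simp
  qed
qed

lemma sorted_last:
  assumes "sorted_wrt (\<subset>) cs" "c \<in> set cs"
  shows "c \<subseteq> last cs"
  using assms
proof (induction cs)
  case Nil then show ?case by simp
next
  case (Cons x xs)
  show ?case
  proof (cases "xs = []")
    case True then show ?thesis using Cons.prems by simp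
  next
    case False
    then have l: "last xs \<in> set xs" by simp
    have s1: "sorted_wrt (\<subset>) xs" using Cons.prems(1) by simp
    have "x \<subset> last xs" using Cons.prems(1) l by simp
    moreover have "c = x \<or> c \<in> set xs" using Cons.prems(2) by simp
    ultimately show ?thesis using Cons.IH[OF s1] False by auto
  qed
qed

lemma height_eq:
  fixes Q :: "'b set set" and b a :: "'b set" and n :: nat and cs0 :: "'b set list"
  assumes "\<And>cs. chain_from_to Q b a cs \<Longrightarrow> length cs - 1 \<le> n"
    and "chain_from_to Q b a cs0" "length cs0 - 1 = n"
  shows "height_in Q b a = n"
  unfolding height_in_def
proof (rule Max_eqI)
  show "finite {length cs - 1 |cs. chain_from_to Q b a cs}"
    by (rule finite_subset[of _ "{..n}"]) (auto dest: assms(1))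
qed (use assms in auto)

locale setting =
  fixes U :: "'a set" and R :: "('a \<times> 'a) set"
  assumes fin: "finite U" and RU: "R \<subseteq> U \<times> U"
    and ser: "serial_on U R" and tr: "trans R"
begin

abbreviation LU where "LU Z \<equiv> lower_approx U R (upper_approx U R Z)"

definition trm :: "'a \<Rightarrow> bool" where
  "trm t \<longleftrightarrow> t \<in> U \<and> (\<forall>s. (t,s) \<in> R \<longrightarrow> (s,t) \<in> R)"

lemma succ_iff: "y \<in> succ_set U R x \<longleftrightarrow> (x,y) \<in> R"
  using RU unfolding succ_set_def by auto

lemma trE: "(x,y) \<in> R \<Longrightarrow> (y,z) \<in> R \<Longrightarrow> (x,z) \<in> R"
  using tr unfolding trans_def by blast

lemma term_refl: assumes "trm t" shows "(t,t) \<in> R"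
proof -
  have "t \<in> U" using assms unfolding trm_def by auto
  then obtain s where s: "(t,s) \<in> R" using ser unfolding serial_on_def by blast
  then have "(s,t) \<in> R" using assms unfolding trm_def by blast
  then show ?thesis using s trE by blast
qed

lemma term_succ:
  assumes "trm t" "(t,s) \<in> R"
  shows "trm s" "(s,w) \<in> R \<longleftrightarrow> (t,w) \<in> R"
proof -
  have st: "(s,t) \<in> R" using assms unfolding trm_def by auto
  show "(s,w) \<in> R \<longleftrightarrow> (t,w) \<in> R" using st assms(2) trE by blast
  show "trm s" unfolding trm_def
  proof (intro conjI allI impI)
    show "s \<in> U" using assms(2) RU by auto
    fix w assume "(s,w) \<in> R"
    then have "(t,w) \<in> R" using st assms(2) trE by blast
    then have "(w,t) \<in> R" using assms(1) unfolding trm_def by auto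
    then show "(w,s) \<in> R" using assms(2) trE by blast
  qed
qed

lemma exists_term:
  assumes "x \<in> U" shows "\<exists>t. trm t \<and> (x,t) \<in> R"
proof -
  obtain y0 where "(x,y0) \<in> R" using ser assms unfolding serial_on_def by auto
  then obtain y where y: "(x,y) \<in> R"
    and ymin: "\<forall>z. (x,z) \<in> R \<longrightarrow> card (succ_set U R y) \<le> card (succ_set U R z)"
    using ex_has_least_nat[of "\<lambda>z. (x,z) \<in> R" y0 "\<lambda>z. card (succ_set U R z)"] by blast
  have sub: "\<And>a b. (a,b) \<in> R \<Longrightarrow> succ_set U R b \<subseteq> succ_set U R a"
    using succ_iff trE by blast
  have fs: "\<And>a. finite (succ_set U R a)" using fin unfolding succ_set_def by auto
  have eq: "\<And>z. (y,z) \<in> R \<Longrightarrow> succ_set U R z = succ_set U R y"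
  proof -
    fix z
    assume yz: "(y,z) \<in> R"
    have s1: "succ_set U R z \<subseteq> succ_set U R y" using yz by (rule sub)
    have "(x,z) \<in> R" using y yz by (rule trE)
    then have c: "card (succ_set U R y) \<le> card (succ_set U R z)" using ymin by blast
    show "succ_set U R z = succ_set U R y"
      using card_seteq[OF fs s1 c] .
  qed
  have "y \<in> U" using y RU by auto
  then obtain y' where y': "(y,y') \<in> R" using ser unfolding serial_on_def by auto
  have "trm y'" unfolding trm_def
  proof (intro conjI allI impI)
    show "y' \<in> U" using y' RU by auto
    fix s assume s: "(y',s) \<in> R"
    then have "(y,s) \<in> R" using y' trE by blast
    then have "succ_set U R s = succ_set U R y" using eq by blast
    also have "\<dots> = succ_set U R y'" using eq y' by auto
    finally have e: "succ_set U R s = succ_set U R y'" .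
    have "y' \<in> succ_set U R y" using y' succ_iff by blast
    then have "y' \<in> succ_set U R s" using e eq y' by simp
    then show "(s,y') \<in> R" using succ_iff by blast
  qed
  moreover have "(x,y') \<in> R" using y y' trE by blast
  ultimately show ?thesis by blast
qed

lemma LU_char:
  "x \<in> LU Z \<longleftrightarrow> x \<in> U \<and> (\<forall>t. trm t \<and> (x,t) \<in> R \<longrightarrow> (\<exists>z\<in>Z. (t,z) \<in> R))"
proof -
  have A: "x \<in> LU Z \<longleftrightarrow> x \<in> U \<and> (\<forall>y. (x,y) \<in> R \<longrightarrow> (\<exists>z\<in>Z. (y,z) \<in> R))"
    unfolding lower_approx_def upper_approx_def succ_set_def using RU by blast
  show ?thesis
  proof
    assume "x \<in> LU Z" then show "x \<in> U \<and> (\<forall>t. trm t \<and> (x,t) \<in> R \<longrightarrow> (\<exists>z\<in>Z. (t,z) \<in> R))"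
      using A by blast
  next
    assume B: "x \<in> U \<and> (\<forall>t. trm t \<and> (x,t) \<in> R \<longrightarrow> (\<exists>z\<in>Z. (t,z) \<in> R))"
    have "\<forall>y. (x,y) \<in> R \<longrightarrow> (\<exists>z\<in>Z. (y,z) \<in> R)"
    proof (intro allI impI)
      fix y assume xy: "(x,y) \<in> R"
      then have "y \<in> U" using RU by auto
      then obtain t where t: "trm t" "(y,t) \<in> R" using exists_term by blast
      then have "(x,t) \<in> R" using xy trE by blast
      then obtain z where "z \<in> Z" "(t,z) \<in> R" using B t by blast
      then show "\<exists>z\<in>Z. (y,z) \<in> R" using t trE by blast
    qed
    then show "x \<in> LU Z" using A B by blast
  qed
qed

lemma term_in_LU: "trm t \<Longrightarrow> t \<in> LU Z \<longleftrightarrow> (\<exists>z\<in>Z. (t,z) \<in> R)"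
  unfolding LU_char using term_refl term_succ trm_def by metis

lemma LU_idem: "LU (LU Z) = LU Z"
proof -
  have "\<And>t. trm t \<Longrightarrow> (\<exists>z\<in>LU Z. (t,z) \<in> R) \<longleftrightarrow> (\<exists>z\<in>Z. (t,z) \<in> R)"
  proof
    fix t assume t: "trm t"
    { assume "\<exists>z\<in>LU Z. (t,z) \<in> R"
      then obtain z where z: "z \<in> LU Z" "(t,z) \<in> R" by blast
      then have "trm z" using term_succ t by blast
      then obtain z' where "z' \<in> Z" "(z,z') \<in> R" using term_in_LU z by blast
      then show "\<exists>z\<in>Z. (t,z) \<in> R" using z trE by blast }
    { assume "\<exists>z\<in>Z. (t,z) \<in> R"
      then have "t \<in> LU Z" using term_in_LU t by blast
      then show "\<exists>z\<in>LU Z. (t,z) \<in> R" using term_refl t by blast }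
  qed
  note eqv = this
  show ?thesis
  proof (rule set_eqI)
    fix x
    have "x \<in> LU (LU Z) \<longleftrightarrow> x\<in>U \<and> (\<forall>t. trm t \<and> (x,t)\<in>R \<longrightarrow> (\<exists>z\<in>LU Z. (t,z)\<in>R))"
      by (rule LU_char)
    also have "\<dots> \<longleftrightarrow> x\<in>U \<and> (\<forall>t. trm t \<and> (x,t)\<in>R \<longrightarrow> (\<exists>z\<in>Z. (t,z)\<in>R))"
      using eqv by blast
    also have "\<dots> \<longleftrightarrow> x \<in> LU Z" by (rule LU_char[symmetric])
    finally show "x \<in> LU (LU Z) \<longleftrightarrow> x \<in> LU Z" .
  qed
qed

lemma LU_mono: "Z \<subseteq> Z' \<Longrightarrow> LU Z \<subseteq> LU Z'"
  using LU_char by blast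

lemma LU_sub: "LU Z \<subseteq> U" using LU_char by blast

lemma LU_Reg: "LU Z \<in> Reg U R"
  unfolding Reg_def using LU_idem LU_sub by auto

lemma LU_empty: "LU {} = {}"
  using LU_char exists_term by blast

lemma Reg_eq: "Y \<in> Reg U R \<Longrightarrow> LU Y = Y"
  unfolding Reg_def by auto

definition rep :: "'a \<Rightarrow> 'a" where "rep t = (SOME p. (t,p) \<in> R)"

definition P :: "'a set" where "P = {t. trm t \<and> t = rep t}"

lemma rep_in: assumes "trm t" shows "(t, rep t) \<in> R"
  unfolding rep_def by (rule someI[of "\<lambda>p. (t,p) \<in> R" t]) (rule term_refl[OF assms])

lemma rep_eq: assumes "\<And>w. (s,w) \<in> R \<longleftrightarrow> (t,w) \<in> R" shows "rep s = rep t"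
proof -
  have "(\<lambda>p. (s,p) \<in> R) = (\<lambda>p. (t,p) \<in> R)" using assms by (rule ext)
  then show ?thesis unfolding rep_def by simp
qed

lemma P_term: "p \<in> P \<Longrightarrow> trm p" unfolding P_def by auto

lemma P_U: "P \<subseteq> U" unfolding P_def trm_def by auto

lemma finP: "finite P" using P_U fin finite_subset by blast

lemma P_unique: "p \<in> P \<Longrightarrow> q \<in> P \<Longrightarrow> (p,q) \<in> R \<Longrightarrow> p = q"
proof -
  assume p: "p \<in> P" and q: "q \<in> P" and pq: "(p,q) \<in> R"
  have "rep q = rep p" using term_succ(2)[OF P_term[OF p] pq] by (rule rep_eq)
  then show "p = q" using p q unfolding P_def by auto
qed

lemma P_cover: "trm t \<Longrightarrow> \<exists>p\<in>P. (t,p) \<in> R"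
proof -
  assume t: "trm t"
  let ?p = "rep t"
  have tp: "(t, ?p) \<in> R" using rep_in t .
  have "trm ?p" using term_succ t tp by blast
  moreover have "rep ?p = rep t" using term_succ(2)[OF t tp] by (rule rep_eq)
  ultimately show ?thesis using tp unfolding P_def by auto
qed

lemma term_in_Reg: "Y \<in> Reg U R \<Longrightarrow> trm t \<Longrightarrow> t \<in> Y \<longleftrightarrow> (\<exists>z\<in>Y. (t,z) \<in> R)"
  using term_in_LU Reg_eq by metis

lemma Reg_P: assumes Y: "Y \<in> Reg U R" shows "LU (P \<inter> Y) = Y"
proof -
  have "\<And>t. trm t \<Longrightarrow> (\<exists>z\<in>P \<inter> Y. (t,z) \<in> R) \<longleftrightarrow> (\<exists>z\<in>Y. (t,z) \<in> R)"
  proof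
    fix t assume t: "trm t"
    show "\<exists>z\<in>P \<inter> Y. (t,z) \<in> R \<Longrightarrow> \<exists>z\<in>Y. (t,z) \<in> R" by blast
    assume "\<exists>z\<in>Y. (t,z) \<in> R"
    then obtain z where z: "z \<in> Y" "(t,z) \<in> R" by blast
    then have tz: "trm z" using term_succ t by blast
    then obtain p where p: "p \<in> P" "(z,p) \<in> R" using P_cover by blast
    have "(p,z) \<in> R" using tz p unfolding trm_def by auto
    then have "p \<in> Y" using term_in_Reg[OF Y P_term[OF p(1)]] z by blast
    then show "\<exists>z\<in>P \<inter> Y. (t,z) \<in> R" using p z trE by blast
  qed
  note eqv = this
  have "LU (P \<inter> Y) = LU Y"
  proof (rule set_eqI)
    fix x
    have "x \<in> LU (P \<inter> Y) \<longleftrightarrow> x\<in>U \<and> (\<forall>t. trm t \<and> (x,t)\<in>R \<longrightarrow> (\<exists>z\<in>P \<inter> Y. (t,z)\<in>R))"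
      by (rule LU_char)
    also have "\<dots> \<longleftrightarrow> x\<in>U \<and> (\<forall>t. trm t \<and> (x,t)\<in>R \<longrightarrow> (\<exists>z\<in>Y. (t,z)\<in>R))"
      using eqv by blast
    also have "\<dots> \<longleftrightarrow> x \<in> LU Y" by (rule LU_char[symmetric])
    finally show "x \<in> LU (P \<inter> Y) \<longleftrightarrow> x \<in> LU Y" .
  qed
  then show ?thesis using Reg_eq Y by simp
qed

lemma P_LU: "S \<subseteq> P \<Longrightarrow> P \<inter> LU S = S"
proof -
  assume S: "S \<subseteq> P"
  have "\<And>p. p \<in> P \<Longrightarrow> p \<in> LU S \<longleftrightarrow> p \<in> S"
  proof -
    fix p assume p: "p \<in> P"
    have "p \<in> LU S \<longleftrightarrow> (\<exists>z\<in>S. (p,z) \<in> R)" using term_in_LU P_term p by blast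
    also have "\<dots> \<longleftrightarrow> p \<in> S" using P_unique p S term_refl P_term by blast
    finally show "p \<in> LU S \<longleftrightarrow> p \<in> S" .
  qed
  then show ?thesis using S by blast
qed

lemma Reg_strict: "A \<in> Reg U R \<Longrightarrow> B \<in> Reg U R \<Longrightarrow> A \<subset> B \<Longrightarrow> card (P \<inter> A) < card (P \<inter> B)"
proof -
  assume A: "A \<in> Reg U R" and B: "B \<in> Reg U R" and AB: "A \<subset> B"
  have "P \<inter> A \<noteq> P \<inter> B"
  proof
    assume "P \<inter> A = P \<inter> B"
    then have "LU (P \<inter> A) = LU (P \<inter> B)" by simp
    then show False using Reg_P[OF A] Reg_P[OF B] AB by simp
  qed
  then have "P \<inter> A \<subset> P \<inter> B" using AB by blast
  then show ?thesis using finP by (meson finite_Int psubset_card_mono)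
qed

lemma chain_exists:
  assumes "finite S" "S \<subseteq> P"
  shows "\<exists>cs. chain_from_to (Reg U R) {} (LU S) cs \<and> length cs - 1 = card S"
  using assms
proof (induction S rule: finite_induct)
  case empty
  have "{} \<in> Reg U R" using LU_Reg LU_empty by metis
  then show ?case using LU_empty by (intro exI[of _ "[{}]"]) (auto simp: chain_from_to_def)
next
  case (insert p S)
  then obtain cs where cs: "chain_from_to (Reg U R) {} (LU S) cs" "length cs - 1 = card S" by auto
  have lt: "LU S \<subset> LU (insert p S)"
  proof -
    have "LU S \<subseteq> LU (insert p S)" by (rule LU_mono) auto
    moreover have "p \<in> LU (insert p S)" using P_LU[of "insert p S"] insert by auto
    moreover have "p \<notin> LU S" using P_LU[of S] insert by auto
    ultimately show ?thesis by blast
  qed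
  have "\<forall>c\<in>set cs. c \<subset> LU (insert p S)"
    using sorted_last cs lt unfolding chain_from_to_def by blast
  then have "chain_from_to (Reg U R) {} (LU (insert p S)) (cs @ [LU (insert p S)])"
    using cs LU_Reg unfolding chain_from_to_def by (auto simp: sorted_wrt_append)
  moreover have "length (cs @ [LU (insert p S)]) - 1 = card (insert p S)"
    using cs insert unfolding chain_from_to_def by (cases cs) auto
  ultimately show ?case by blast
qed

lemma hReg_eq: assumes Y: "Y \<in> Reg U R" shows "hReg U R Y = card (P \<inter> Y)"
proof -
  obtain cs0 where c0: "chain_from_to (Reg U R) {} (LU (P \<inter> Y)) cs0" "length cs0 - 1 = card (P \<inter> Y)"
    using chain_exists[of "P \<inter> Y"] finP by auto
  show ?thesis unfolding hReg_def
  proof (rule height_eq[of "Reg U R" "{}" Y "card (P \<inter> Y)" cs0])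
    fix cs assume c: "chain_from_to (Reg U R) {} Y cs"
    have "card (P \<inter> hd cs) + (length cs - 1) \<le> card (P \<inter> last cs)"
      using c Reg_strict unfolding chain_from_to_def
      by (intro chain_bound[where Q = "Reg U R"]) auto
    then show "length cs - 1 \<le> card (P \<inter> Y)" using c unfolding chain_from_to_def by simp
  next
    show "chain_from_to (Reg U R) {} Y cs0" "length cs0 - 1 = card (P \<inter> Y)"
      using c0 Reg_P Y by auto
  qed
qed

lemma indep_empty: "indepM U R {}" unfolding indepM_def by auto

lemma rank_fin: "finite {card I | I. I \<subseteq> X \<and> indepM U R I}"
  by (rule finite_subset[of _ "{..card U}"])
     (auto simp: indepM_def intro: card_mono[OF fin])

lemma rank_ge: "I \<subseteq> X \<Longrightarrow> indepM U R I \<Longrightarrow> card I \<le> rankM U R X"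
  unfolding rankM_def by (rule Max_ge[OF rank_fin]) blast

lemma rank_le: "(\<And>I. I \<subseteq> X \<Longrightarrow> indepM U R I \<Longrightarrow> card I \<le> n) \<Longrightarrow> rankM U R X \<le> n"
  unfolding rankM_def using rank_fin indep_empty
  by (intro Max.boundedI) auto

lemma rank_witness: "\<exists>I. I \<subseteq> X \<and> indepM U R I \<and> card I = rankM U R X"
proof -
  have "rankM U R X \<in> {card I | I. I \<subseteq> X \<and> indepM U R I}"
    unfolding rankM_def using rank_fin indep_empty by (intro Max_in) auto
  then show ?thesis by auto
qed

lemma rank_mono: assumes "X \<subseteq> X'" shows "rankM U R X \<le> rankM U R X'"
proof -
  obtain I where I: "I \<subseteq> X" "indepM U R I" "card I = rankM U R X" using rank_witness by blast
  have "I \<subseteq> X'" using I(1) assms by blast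
  then have "card I \<le> rankM U R X'" using I(2) by (rule rank_ge)
  then show ?thesis using I(3) by simp
qed

lemma Reg_rank_le: assumes X: "X \<in> Reg U R" shows "rankM U R X \<le> card (P \<inter> X)"
proof (rule rank_le)
  fix I assume I: "I \<subseteq> X" "indepM U R I"
  then have "card (I \<inter> X) \<le> hReg U R X" using X unfolding indepM_def by blast
  moreover have "I \<inter> X = I" using I(1) by blast
  ultimately show "card I \<le> card (P \<inter> X)" using hReg_eq[OF X] by simp
qed

lemma Reg_rank_ext:
  assumes X: "X \<in> Reg U R" and u: "u \<in> U" "u \<notin> X"
  shows "card (P \<inter> X) + 1 \<le> rankM U R (X \<union> {u})"
proof -
  let ?I = "insert u (P \<inter> X)"
  have uP: "u \<notin> P \<inter> X" using u by auto
  have ind: "indepM U R ?I" unfolding indepM_def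
  proof (intro conjI ballI)
    show "?I \<subseteq> U" using u P_U by auto
    fix Y assume Y: "Y \<in> Reg U R"
    show "card (?I \<inter> Y) \<le> hReg U R Y"
    proof (cases "u \<in> Y")
      case False
      then have "?I \<inter> Y \<subseteq> P \<inter> Y" by auto
      then show ?thesis using hReg_eq Y finP by (simp add: card_mono)
    next
      case True
      have "u \<notin> LU X" using Reg_eq X u by simp
      then obtain t where t: "trm t" "(u,t) \<in> R" "\<not> (\<exists>z\<in>X. (t,z) \<in> R)"
        using LU_char u by blast
      obtain p where p: "p \<in> P" "(t,p) \<in> R" using P_cover t by blast
      have pX: "p \<notin> X" using p t by blast
      have "u \<in> LU Y" using Reg_eq Y True by simp
      then obtain z where z: "z \<in> Y" "(t,z) \<in> R" using LU_char t by blast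
      have "(p,z) \<in> R" using term_succ(2)[OF t(1) p(2)] z by blast
      then have pY: "p \<in> Y" using term_in_Reg[OF Y P_term[OF p(1)]] z by blast
      have "?I \<inter> Y \<subseteq> insert u ((P \<inter> Y) - {p})" using pX by auto
      then have "card (?I \<inter> Y) \<le> card (insert u ((P \<inter> Y) - {p}))"
        using finP by (intro card_mono) auto
      also have "\<dots> \<le> Suc (card ((P \<inter> Y) - {p}))" by (rule card_insert_le_m1) simp_all
      also have "\<dots> = card (P \<inter> Y)" using pY p finP
        by (metis IntI card_Suc_Diff1 finite_Int)
      finally show ?thesis using hReg_eq Y by simp
    qed
  qed
  have "card ?I \<le> rankM U R (X \<union> {u})" using ind by (intro rank_ge) auto
  moreover have "card ?I = card (P \<inter> X) + 1" using uP finP by simp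
  ultimately show ?thesis by simp
qed

lemma Reg_closed: assumes X: "X \<in> Reg U R" shows "X \<in> closedSets U R"
proof -
  have XU: "X \<subseteq> U" using X unfolding Reg_def by auto
  have "clM U R X = X"
  proof
    show "X \<subseteq> clM U R X" using XU unfolding clM_def by (auto simp: insert_absorb)
    show "clM U R X \<subseteq> X"
    proof
      fix u assume "u \<in> clM U R X"
      then have u: "u \<in> U" "rankM U R (X \<union> {u}) = rankM U R X" unfolding clM_def by auto
      show "u \<in> X"
      proof (rule ccontr)
        assume "u \<notin> X"
        then have "card (P \<inter> X) + 1 \<le> rankM U R (X \<union> {u})" using Reg_rank_ext X u by blast
        then show False using u Reg_rank_le[OF X] by simp
      qed
    qed
  qed
  then show ?thesis using XU unfolding closedSets_def by auto
qed

lemma empty_Reg: "{} \<in> Reg U R" using LU_Reg LU_empty by metis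

lemma cl_empty: "clM U R {} = {}"
  using Reg_closed[OF empty_Reg] unfolding closedSets_def by auto

lemma closed_strict:
  assumes A: "A \<in> closedSets U R" and B: "B \<in> closedSets U R" and AB: "A \<subset> B"
  shows "rankM U R A < rankM U R B"
proof -
  obtain b where b: "b \<in> B" "b \<notin> A" using AB by blast
  have "b \<in> U" using B b unfolding closedSets_def by auto
  moreover have "b \<notin> clM U R A" using A b unfolding closedSets_def by auto
  ultimately have "rankM U R (A \<union> {b}) \<noteq> rankM U R A" unfolding clM_def by auto
  moreover have "rankM U R A \<le> rankM U R (A \<union> {b})" by (rule rank_mono) auto
  moreover have "rankM U R (A \<union> {b}) \<le> rankM U R B" using b AB by (intro rank_mono) auto
  ultimately show ?thesis by linarith
qed

lemma h1_eq: assumes X: "X \<in> Reg U R" shows "h1 U R X = card (P \<inter> X)"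
proof -
  obtain cs0 where c0: "chain_from_to (Reg U R) {} (LU (P \<inter> X)) cs0" "length cs0 - 1 = card (P \<inter> X)"
    using chain_exists[of "P \<inter> X"] finP by auto
  show ?thesis unfolding h1_def cl_empty
  proof (rule height_eq[of "closedSets U R" "{}" X "card (P \<inter> X)" cs0])
    fix cs assume c: "chain_from_to (closedSets U R) {} X cs"
    have "rankM U R (hd cs) + (length cs - 1) \<le> rankM U R (last cs)"
      using c closed_strict unfolding chain_from_to_def
      by (intro chain_bound[where Q = "closedSets U R"]) auto
    then show "length cs - 1 \<le> card (P \<inter> X)"
      using c Reg_rank_le[OF X] unfolding chain_from_to_def by simp
  next
    show "chain_from_to (closedSets U R) {} X cs0" "length cs0 - 1 = card (P \<inter> X)"
      using c0 Reg_P X Reg_closed unfolding chain_from_to_def by auto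
  qed
qed

end

theorem mainTheorem10:
  fixes U :: "'a set" and R :: "('a \<times> 'a) set"
  assumes "finite U" and "U \<noteq> {}"
    and "R \<subseteq> U \<times> U"
    and "serial_on U R" and "trans R"
  shows "\<forall>X \<in> Reg U R. X \<in> closedSets U R \<and> hReg U R X = h1 U R X"
proof -
  interpret setting U R using assms by unfold_locales auto
  show ?thesis using Reg_closed hReg_eq h1_eq by auto
qed

end
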